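(* Let $q\ge2$, $G\in\mathbb G^q$ and $S=\Psi(G)$. Let $v$ be a vertex of color $i\in\{1,\dots,q\}$ of $S$, and let $e,e'$ be the color-$i$ edges of $G$ corresponding to two corners of $v$. These two corners split the set of edges incident to $v$ into two (cyclic-interval) sets $V_a$ and $V_b$. Suppose that for one of these sets, say $V_a$, every edge $a\in V_a$, with white endpoint $w_a$, is a bridge of $S$ such that the connected component of $S\setminus a$ containing $w_a$ is a tree. Then there exists a path in $G$ containing both $e$ and $e'$ and no edge of color $0$.
   Context: Fix an integer $q\ge 2$. A $(q+1)$-edge-colored graph (colored graph) is a finite connected graph, multiple edges allowed and no loops, whose edges carry colors in $\{0,1,\dots,q\}$ such that every vertex is incident to exactly one edge of each color. It is rooted if one color-0 edge is distinguished and oriented; it is bipartite if its vertices can be colored black and white so that every edge joins a black and a white vertex, with the convention that the origin of the root edge is black. $\mathbb G^q$ denotes the set of rooted bipartite colored graphs. Constellations: given $G\in\mathbb G^q$, its constellation $S=\Psi(G)$ is obtained as follows: orient every edge from its black to its white endpoint; contract every color-0 edge into a single vertex, called a white vertex of $S$. For each $i\in\{1,\dots,q\}$ the color-$i$ edges now form directed cycles; for each such cycle, passing through white vertices $w_1,\dots,w_p$ in this cyclic order, add a new vertex of color $i$ joined by one color-$i$ edge to each $w_k$, equip the new vertex with the cyclic order $(w_1,\dots,w_p)$ of its incident edges, and delete the original color-$i$ edges of the cycle. The corner of this color-$i$ vertex between its edges to $w_k$ and $w_{k+1}$ (indices mod $p$) is said to correspond to the original color-$i$ edge of $G$ directed from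 (the black endpoint of the color-0 edge) $w_k$ to (the white endpoint of the color-0 edge) $w_{k+1}$. *)

theory Defs
  imports Main
begin

definition g_adj :: "'e set \<Rightarrow> ('e \<Rightarrow> 'a set) \<Rightarrow> ('a \<times> 'a) set" where
  "g_adj Es ends = {(x, y). \<exists>e\<in>Es. ends e = {x, y} \<and> x \<noteq> y}"

definition g_conn :: "'a set \<Rightarrow> 'e set \<Rightarrow> ('e \<Rightarrow> 'a set) \<Rightarrow> 'a \<Rightarrow> 'a \<Rightarrow> bool" where
  "g_conn Vs Es ends x y \<longleftrightarrow> x \<in> Vs \<and> y \<in> Vs \<and> (x, y) \<in> (g_adj Es ends \<inter> (Vs \<times> Vs))\<^sup>*"

definition g_connected :: "'a set \<Rightarrow> 'e set \<Rightarrow> ('e \<Rightarrow> 'a set) \<Rightarrow> bool" where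
  "g_connected Vs Es ends \<longleftrightarrow> Vs \<noteq> {} \<and> (\<forall>x\<in>Vs. \<forall>y\<in>Vs. g_conn Vs Es ends x y)"

definition g_has_cycle :: "'a set \<Rightarrow> 'e set \<Rightarrow> ('e \<Rightarrow> 'a set) \<Rightarrow> bool" where
  "g_has_cycle Vs Es ends \<longleftrightarrow>
     (\<exists>vs es. length vs = length es \<and> length vs \<ge> 2 \<and> distinct vs \<and> distinct es \<and>
        set vs \<subseteq> Vs \<and> set es \<subseteq> Es \<and>
        (\<forall>k < length vs. ends (es ! k) = {vs ! k, vs ! ((k + 1) mod length vs)}))"

definition g_tree :: "'a set \<Rightarrow> 'e set \<Rightarrow> ('e \<Rightarrow> 'a set) \<Rightarrow> bool" where
  "g_tree Vs Es ends \<longleftrightarrow> g_connected Vs Es ends \<and> \<not> g_has_cycle Vs Es ends"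

definition g_bridge :: "'a set \<Rightarrow> 'e set \<Rightarrow> ('e \<Rightarrow> 'a set) \<Rightarrow> 'e \<Rightarrow> bool" where
  "g_bridge Vs Es ends a \<longleftrightarrow> a \<in> Es \<and>
     (\<exists>x y. ends a = {x, y} \<and> x \<noteq> y \<and> \<not> g_conn Vs (Es - {a}) ends x y)"

definition comp_minus_verts :: "'a set \<Rightarrow> 'e set \<Rightarrow> ('e \<Rightarrow> 'a set) \<Rightarrow> 'e \<Rightarrow> 'a \<Rightarrow> 'a set" where
  "comp_minus_verts Vs Es ends a w = {x. g_conn Vs (Es - {a}) ends w x}"

definition comp_minus_edges :: "'a set \<Rightarrow> 'e set \<Rightarrow> ('e \<Rightarrow> 'a set) \<Rightarrow> 'e \<Rightarrow> 'a \<Rightarrow> 'e set" where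
  "comp_minus_edges Vs Es ends a w =
     {e \<in> Es - {a}. ends e \<subseteq> comp_minus_verts Vs Es ends a w}"

text \<open>Encoding: vertex set V; sigma i x is the other endpoint of the unique colour-i
  edge at x (so sigma i is a fixed-point-free involution of V).  Colour-i edges are
  identified with pairs (i, {x, sigma i x}).  The root is a colour-0 edge oriented
  out of the black vertex r.  B is the set of black vertices.\<close>

definition colored_graph :: "nat \<Rightarrow> 'v set \<Rightarrow> (nat \<Rightarrow> 'v \<Rightarrow> 'v) \<Rightarrow> bool" where
  "colored_graph q V \<sigma> \<longleftrightarrow> finite V \<and> V \<noteq> {} \<and>
     (\<forall>i\<le>q. \<forall>x\<in>V. \<sigma> i x \<in> V \<and> \<sigma> i x \<noteq> x \<and> \<sigma> i (\<sigma> i x) = x) \<and>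
     (\<forall>x\<in>V. \<forall>y\<in>V. (x, y) \<in> {(u, \<sigma> i u) | u i. u \<in> V \<and> i \<le> q}\<^sup>*)"

definition rooted_bipartite_cg :: "nat \<Rightarrow> 'v set \<Rightarrow> (nat \<Rightarrow> 'v \<Rightarrow> 'v) \<Rightarrow> 'v \<Rightarrow> 'v set \<Rightarrow> bool" where
  "rooted_bipartite_cg q V \<sigma> r B \<longleftrightarrow> colored_graph q V \<sigma> \<and> r \<in> V \<and> r \<in> B \<and> B \<subseteq> V \<and>
     (\<forall>i\<le>q. \<forall>x\<in>V. x \<in> B \<longleftrightarrow> \<sigma> i x \<notin> B)"

text \<open>White vertices of S are the colour-0 edges of G, identified with their black
  endpoints.  The colour-i edge of G from black b goes to white sigma i b, lying on the
  colour-0 edge with black end sigma 0 (sigma i b); so after contraction the colour-i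
  edges form the permutation pi_i = sigma 0 o sigma i of B, whose cycles are the
  colour-i vertices of S.  The edge (i, b) of S joins White b and the colour-i vertex
  containing b; the corner of that vertex between its edges to b and pi_i b corresponds
  to the colour-i edge of G from b to sigma i b.\<close>

datatype 'v svert = White 'v | ColV nat "'v set"

definition cperm :: "(nat \<Rightarrow> 'v \<Rightarrow> 'v) \<Rightarrow> nat \<Rightarrow> 'v \<Rightarrow> 'v" where
  "cperm \<sigma> i = \<sigma> 0 \<circ> \<sigma> i"

definition orbit_of :: "('v \<Rightarrow> 'v) \<Rightarrow> 'v \<Rightarrow> 'v set" where
  "orbit_of f x = {(f ^^ k) x | k. True}"

definition const_verts :: "nat \<Rightarrow> 'v set \<Rightarrow> (nat \<Rightarrow> 'v \<Rightarrow> 'v) \<Rightarrow> 'v svert set" where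
  "const_verts q B \<sigma> = White ` B \<union> {ColV i (orbit_of (cperm \<sigma> i) b) | i b. 1 \<le> i \<and> i \<le> q \<and> b \<in> B}"

definition const_edges :: "nat \<Rightarrow> 'v set \<Rightarrow> (nat \<times> 'v) set" where
  "const_edges q B = {(i, b). 1 \<le> i \<and> i \<le> q \<and> b \<in> B}"

definition const_ends :: "(nat \<Rightarrow> 'v \<Rightarrow> 'v) \<Rightarrow> nat \<times> 'v \<Rightarrow> 'v svert set" where
  "const_ends \<sigma> a = {White (snd a), ColV (fst a) (orbit_of (cperm \<sigma> (fst a)) (snd a))}"

text \<open>Edges of a colour-i vertex lying strictly after the corner at x up to (and
  including the edge to) y, in the cyclic order of the cycle of f: f x, ..., y.\<close>
definition cyc_interval :: "('v \<Rightarrow> 'v) \<Rightarrow> 'v \<Rightarrow> 'v \<Rightarrow> 'v set" where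
  "cyc_interval f x y = {(f ^^ k) x | k. 1 \<le> k \<and> k \<le> (LEAST m. 0 < m \<and> (f ^^ m) x = y)}"

definition side_tree_bridges :: "nat \<Rightarrow> 'v set \<Rightarrow> (nat \<Rightarrow> 'v \<Rightarrow> 'v) \<Rightarrow> (nat \<times> 'v) set \<Rightarrow> bool" where
  "side_tree_bridges q B \<sigma> Va \<longleftrightarrow>
     (\<forall>a\<in>Va. g_bridge (const_verts q B \<sigma>) (const_edges q B) (const_ends \<sigma>) a \<and>
        g_tree (comp_minus_verts (const_verts q B \<sigma>) (const_edges q B) (const_ends \<sigma>) a (White (snd a)))
               (comp_minus_edges (const_verts q B \<sigma>) (const_edges q B) (const_ends \<sigma>) a (White (snd a)))
               (const_ends \<sigma>))"

definition path_no0 :: "nat \<Rightarrow> 'v set \<Rightarrow> (nat \<Rightarrow> 'v \<Rightarrow> 'v) \<Rightarrow> 'v list \<Rightarrow> nat list \<Rightarrow> bool" where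
  "path_no0 q V \<sigma> vs cs \<longleftrightarrow> length vs = length cs + 1 \<and> distinct vs \<and> set vs \<subseteq> V \<and>
     (\<forall>k < length cs. 1 \<le> cs ! k \<and> cs ! k \<le> q \<and> vs ! (k + 1) = \<sigma> (cs ! k) (vs ! k))"

definition path_edges :: "'v list \<Rightarrow> nat list \<Rightarrow> (nat \<times> 'v set) set" where
  "path_edges vs cs = {(cs ! k, {vs ! k, vs ! (k + 1)}) | k. k < length cs}"

end

theory Submission
  imports Defs
begin


lemma funpow_period:
  assumes "finite A" "f ` A \<subseteq> A" "inj_on f A" "x \<in> A"
  shows "\<exists>n>0. (f^^n) x = x"
proof -
  have inA: "(f^^k) x \<in> A" for k by (induction k) (use assms in auto)
  have "\<not> inj (\<lambda>k. (f^^k) x)"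
  proof
    assume "inj (\<lambda>k. (f^^k) x)"
    moreover have "finite (range (\<lambda>k. (f^^k) x))" using inA assms(1)
      by (meson finite_subset image_subsetI)
    ultimately have "finite (UNIV::nat set)" using finite_imageD by blast
    then show False by simp
  qed
  then obtain k1 k2 where k: "k1 \<noteq> k2" "(f^^k1) x = (f^^k2) x" unfolding inj_def by blast
  have main: "\<forall>k2>k1. (f^^k1) x = (f^^k2) x \<longrightarrow> (\<exists>n>0. (f^^n) x = x)" for k1
  proof (induction k1)
    case 0 then show ?case by auto
  next
    case (Suc k1)
    show ?case
    proof (intro allI impI)
      fix k2 assume a: "Suc k1 < k2" "(f^^Suc k1) x = (f^^k2) x"
      then obtain k2' where k2': "k2 = Suc k2'" by (cases k2) auto
      have "f ((f^^k1) x) = f ((f^^k2') x)" using a k2' by simp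
      then have "(f^^k1) x = (f^^k2') x" using assms(3) inA by (meson inj_onD)
      then show "\<exists>n>0. (f^^n) x = x" using Suc a k2' by auto
    qed
  qed
  show ?thesis
  proof (cases "k1 < k2")
    case True then show ?thesis using main k by blast
  next
    case False then have "k2 < k1" using k by simp
    then show ?thesis using main[of k2] k by metis
  qed
qed

locale cg =
  fixes q :: nat and V :: "'v set" and \<sigma> :: "nat \<Rightarrow> 'v \<Rightarrow> 'v" and r :: 'v and B :: "'v set"
  assumes rb: "rooted_bipartite_cg q V \<sigma> r B" and q2: "2 \<le> q"
begin

lemma finV: "finite V" using rb unfolding rooted_bipartite_cg_def colored_graph_def by blast
lemma BV: "B \<subseteq> V" using rb unfolding rooted_bipartite_cg_def by blast
lemma finB: "finite B" using finV BV finite_subset by blast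
lemma sV: "c \<le> q \<Longrightarrow> x \<in> V \<Longrightarrow> \<sigma> c x \<in> V"
  using rb unfolding rooted_bipartite_cg_def colored_graph_def by blast
lemma sinv: "c \<le> q \<Longrightarrow> x \<in> V \<Longrightarrow> \<sigma> c (\<sigma> c x) = x"
  using rb unfolding rooted_bipartite_cg_def colored_graph_def by blast
lemma sB: "c \<le> q \<Longrightarrow> x \<in> V \<Longrightarrow> (x \<in> B \<longleftrightarrow> \<sigma> c x \<notin> B)"
  using rb unfolding rooted_bipartite_cg_def by blast

lemma piB: "c \<le> q \<Longrightarrow> b \<in> B \<Longrightarrow> cperm \<sigma> c b \<in> B"
  unfolding cperm_def using sB sV BV by (metis comp_apply in_mono le0)

lemma s0pi: "c \<le> q \<Longrightarrow> b \<in> B \<Longrightarrow> \<sigma> 0 (cperm \<sigma> c b) = \<sigma> c b"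
  unfolding cperm_def using sinv sV BV by auto

lemma pi_inj: "c \<le> q \<Longrightarrow> inj_on (cperm \<sigma> c) B"
proof (rule inj_onI)
  fix x y assume "c \<le> q" "x \<in> B" "y \<in> B" "cperm \<sigma> c x = cperm \<sigma> c y"
  then have "\<sigma> c x = \<sigma> c y" using s0pi by metis
  then show "x = y" using sinv BV \<open>c \<le> q\<close> \<open>x \<in> B\<close> \<open>y \<in> B\<close> by (metis subsetD)
qed

lemma powB: "c \<le> q \<Longrightarrow> b \<in> B \<Longrightarrow> (cperm \<sigma> c ^^ k) b \<in> B"
  by (induction k) (auto simp: piB)

lemma period: "c \<le> q \<Longrightarrow> b \<in> B \<Longrightarrow> \<exists>p>0. (cperm \<sigma> c ^^ p) b = b"
  using funpow_period[OF finB _ pi_inj] piB by blast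

lemma orbitB: "c \<le> q \<Longrightarrow> b \<in> B \<Longrightarrow> orbit_of (cperm \<sigma> c) b \<subseteq> B"
  unfolding orbit_of_def using powB by blast

lemma orbit_eq:
  assumes "c \<le> q" "b \<in> B" "y \<in> orbit_of (cperm \<sigma> c) b"
  shows "orbit_of (cperm \<sigma> c) y = orbit_of (cperm \<sigma> c) b"
proof -
  let ?f = "cperm \<sigma> c"
  obtain j where j: "y = (?f^^j) b" using assms(3) unfolding orbit_of_def by blast
  obtain p where p: "p > 0" "(?f^^p) b = b" using period assms by blast
  have pm: "(?f^^(p*m)) b = b" for m
    by (induction m) (simp_all add: funpow_add p(2) funpow_mult[symmetric] mult.commute)
  have "(?f^^(p*j - j)) y = b"
  proof -
    have "p*j \<ge> j" using p by simp
    have e: "(?f^^(p*j - j)) ((?f^^j) b) = (?f^^(p*j - j + j)) b" by (simp add: funpow_add)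
    have "(?f^^(p*j - j)) y = (?f^^(p*j)) b" using j e \<open>p*j \<ge> j\<close> by simp
    then show ?thesis using pm by simp
  qed
  then have x: "b = (?f^^(p*j - j)) y" by simp
  show ?thesis unfolding orbit_of_def
  proof (intro equalityI subsetI)
    fix z assume "z \<in> {(?f ^^ k) y |k. True}"
    then obtain k where "z = (?f^^k) y" by blast
    then have "z = (?f^^(k+j)) b" using j by (simp add: funpow_add)
    then show "z \<in> {(?f ^^ k) b |k. True}" by blast
  next
    fix z assume "z \<in> {(?f ^^ k) b |k. True}"
    then obtain k where "z = (?f^^k) b" by blast
    then have "z = (?f^^(k+(p*j-j))) y" using x by (simp add: funpow_add)
    then show "z \<in> {(?f ^^ k) y |k. True}" by blast
  qed
qed

definition Rel where "Rel = {(u, \<sigma> c u) | u c. u \<in> V \<and> 1 \<le> c \<and> c \<le> q}"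
definition good where "good u \<longleftrightarrow> (\<sigma> 0 u, u) \<in> Rel\<^sup>*"

lemma Rel_edge: "x \<in> V \<Longrightarrow> 1 \<le> c \<Longrightarrow> c \<le> q \<Longrightarrow> (x, \<sigma> c x) \<in> Rel"
  unfolding Rel_def by blast

lemma Rel_sym: "(x, y) \<in> Rel \<Longrightarrow> (y, x) \<in> Rel"
  unfolding Rel_def using sV sinv by (smt (verit, best) mem_Collect_eq prod.inject)

lemma Rel_conv: "Rel\<inverse> = Rel" using Rel_sym by auto

lemma Rel_star_sym: "(x, y) \<in> Rel\<^sup>* \<Longrightarrow> (y, x) \<in> Rel\<^sup>*"
  by (metis Rel_conv converse_iff rtrancl_converse)

lemma orbit_good:
  assumes b: "b \<in> B" and c: "1 \<le> c" "c \<le> q"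
    and all: "\<forall>u \<in> orbit_of (cperm \<sigma> c) b. u \<noteq> b \<longrightarrow> good u"
  shows "good b"
proof -
  let ?f = "cperm \<sigma> c"
  let ?u = "\<lambda>k. (?f^^k) b"
  have uB: "?u k \<in> B" for k using powB b c by blast
  have uo: "?u k \<in> orbit_of ?f b" for k unfolding orbit_of_def by blast
  have key: "(\<sigma> 0 (?u (Suc k)), b) \<in> Rel\<^sup>*" for k
  proof (induction k)
    case 0
    have "\<sigma> 0 (?u (Suc 0)) = \<sigma> c b" using s0pi b c by simp
    moreover have "(\<sigma> c b, b) \<in> Rel" using Rel_sym Rel_edge b c BV by blast
    ultimately show ?case by simp
  next
    case (Suc k)
    have e1: "\<sigma> 0 (?u (Suc (Suc k))) = \<sigma> c (?u (Suc k))" using s0pi[OF c(2) uB[of "Suc k"]] by simp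
    have e2: "(\<sigma> c (?u (Suc k)), ?u (Suc k)) \<in> Rel" using Rel_sym Rel_edge uB c BV by blast
    have "(?u (Suc k), b) \<in> Rel\<^sup>*"
    proof (cases "?u (Suc k) = b")
      case True then show ?thesis by simp
    next
      case False
      then have "good (?u (Suc k))" using all uo by blast
      then have "(?u (Suc k), \<sigma> 0 (?u (Suc k))) \<in> Rel\<^sup>*" unfolding good_def using Rel_star_sym by blast
      then show ?thesis using Suc by (meson rtrancl_trans)
    qed
    then show ?case using e1 e2 by (metis converse_rtrancl_into_rtrancl)
  qed
  obtain p where p: "p > 0" "?u p = b" using period b c by blast
  then obtain k where "p = Suc k" using gr0_implies_Suc by blast
  then have "(\<sigma> 0 b, b) \<in> Rel\<^sup>*" using key p by metis
  then show ?thesis unfolding good_def .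
qed

lemma bad_step:
  assumes "b \<in> B" "1 \<le> c" "c \<le> q" "\<not> good b"
  shows "\<exists>u. u \<in> orbit_of (cperm \<sigma> c) b \<and> u \<noteq> b \<and> \<not> good u \<and> u \<in> B"
  using orbit_good[OF assms(1-3)] assms(4) orbitB assms by blast

end



lemma walk_cycle:
  fixes x :: "nat \<Rightarrow> 'a" and e :: "nat \<Rightarrow> 'e"
  assumes ends: "\<And>k. ends (e k) = {x k, x (Suc k)}"
    and nl: "\<And>k. x k \<noteq> x (Suc k)"
    and nb: "\<And>k. e k \<noteq> e (Suc k)"
    and mj: "m < j" "x m = x j"
    and inj: "inj_on x {0..<j}"
    and inV: "\<forall>k\<le>j. x k \<in> Vs" and inE: "\<forall>k<j. e k \<in> Es"
  shows "g_has_cycle Vs Es ends"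
proof -
  define L where "L = j - m"
  define vs where "vs = map x [m..<j]"
  define es where "es = map e [m..<j]"
  have L2: "L \<ge> 2"
  proof (rule ccontr)
    assume "\<not> L \<ge> 2"
    then have "j = Suc m" using mj unfolding L_def by simp
    then show False using nl mj by metis
  qed
  have injm: "inj_on x {m..<j}" using inj by (rule inj_on_subset) auto
  have dv: "distinct vs" unfolding vs_def by (simp add: distinct_map injm)
  have xeq: "x s = x t \<Longrightarrow> s < j \<Longrightarrow> t < j \<Longrightarrow> s = t" for s t
    using inj by (auto dest: inj_onD)
  have inje: "inj_on e {m..<j}"
  proof -
    have "False" if st: "m \<le> s" "s < t" "t < j" "e s = e t" for s t
    proof -
      have E: "{x s, x (Suc s)} = {x t, x (Suc t)}" using ends st(4) by metis
      have "x s \<noteq> x t" using xeq st by fastforce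
      then have xs: "x s = x (Suc t)" using E by blast
      show False
      proof (cases "Suc t < j")
        case True then show ?thesis using xeq[OF xs] st by simp
      next
        case False
        then have tj: "Suc t = j" using st by simp
        then have sm: "s = m" using xs mj xeq st by (metis less_trans)
        have "x (Suc s) \<in> {x t, x (Suc t)}" using E by blast
        moreover have "x (Suc s) \<noteq> x (Suc t)" using nl sm tj mj by metis
        ultimately have "x (Suc s) = x t" by blast
        then have "Suc s = t" using xeq st by (metis Suc_lessI less_trans_Suc xeq)
        then show False using nb st(4) by metis
      qed
    qed
    then show ?thesis unfolding inj_on_def
      by (metis atLeastLessThan_iff linorder_neqE_nat)
  qed
  have de: "distinct es" unfolding es_def by (simp add: distinct_map inje)
  have lv: "length vs = L" "length es = L" unfolding vs_def es_def L_def by simp_all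
  have sv: "set vs \<subseteq> Vs" unfolding vs_def using inV by auto
  have se: "set es \<subseteq> Es" unfolding es_def using inE by auto
  have ed: "\<forall>k < length vs. ends (es ! k) = {vs ! k, vs ! ((k + 1) mod length vs)}"
  proof (intro allI impI)
    fix k assume k: "k < length vs"
    have a: "es ! k = e (m + k)" "vs ! k = x (m + k)" using k lv unfolding vs_def es_def L_def by simp_all
    have "vs ! ((k + 1) mod length vs) = x (Suc (m + k))"
    proof (cases "k + 1 < L")
      case True then show ?thesis using lv unfolding vs_def L_def by simp
    next
      case False then have "k + 1 = L" using k lv by simp
      then have "Suc (m + k) = j" using mj unfolding L_def by simp
      then show ?thesis using lv mj \<open>k + 1 = L\<close> unfolding vs_def L_def by simp
    qed
    then show "ends (es ! k) = {vs ! k, vs ! ((k + 1) mod length vs)}" using a ends by simp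
  qed
  show ?thesis unfolding g_has_cycle_def
    using lv L2 dv de sv se ed by metis
qed




lemma g_conn_sym: "g_conn Vs E en x y \<Longrightarrow> g_conn Vs E en y x"
proof -
  assume a: "g_conn Vs E en x y"
  let ?R = "g_adj E en \<inter> Vs \<times> Vs"
  have s: "?R\<inverse> = ?R" unfolding g_adj_def by (auto simp: insert_commute)
  have "(x, y) \<in> ?R\<^sup>*" using a unfolding g_conn_def by blast
  then have "(y, x) \<in> (?R\<inverse>)\<^sup>*" by (simp add: rtrancl_converse)
  then show ?thesis using a s unfolding g_conn_def by simp
qed

lemma g_conn_ext:
  assumes "g_conn Vs E en x y" "f \<in> E" "en f = {y, z}" "y \<noteq> z" "z \<in> Vs"
  shows "g_conn Vs E en x z"
proof -
  have "(y, z) \<in> g_adj E en \<inter> Vs \<times> Vs" using assms unfolding g_adj_def g_conn_def by blast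
  then show ?thesis using assms(1,5) unfolding g_conn_def by (meson rtrancl.rtrancl_into_rtrancl)
qed

context cg begin

lemma White_in: "b \<in> B \<Longrightarrow> White b \<in> const_verts q B \<sigma>"
  unfolding const_verts_def by blast
lemma ColV_in: "1 \<le> c \<Longrightarrow> c \<le> q \<Longrightarrow> b \<in> B \<Longrightarrow> ColV c (orbit_of (cperm \<sigma> c) b) \<in> const_verts q B \<sigma>"
  unfolding const_verts_def by blast
lemma E_in: "1 \<le> c \<Longrightarrow> c \<le> q \<Longrightarrow> b \<in> B \<Longrightarrow> (c, b) \<in> const_edges q B"
  unfolding const_edges_def by blast
lemma fin_verts: "finite (const_verts q B \<sigma>)"
proof -
  have "{ColV i (orbit_of (cperm \<sigma> i) b) | i b. 1 \<le> i \<and> i \<le> q \<and> b \<in> B}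
     \<subseteq> (\<lambda>(i, b). ColV i (orbit_of (cperm \<sigma> i) b)) ` ({1..q} \<times> B)" by auto
  then show ?thesis unfolding const_verts_def using finB
    by (meson finite_SigmaI finite_Un finite_atLeastAtMost finite_imageI finite_subset)
qed

lemma tree_good:
  assumes w: "w \<in> B" and i: "1 \<le> i" "i \<le> q"
    and br: "g_bridge (const_verts q B \<sigma>) (const_edges q B) (const_ends \<sigma>) (i, w)"
    and tr: "g_tree (comp_minus_verts (const_verts q B \<sigma>) (const_edges q B) (const_ends \<sigma>) (i, w) (White w))
                    (comp_minus_edges (const_verts q B \<sigma>) (const_edges q B) (const_ends \<sigma>) (i, w) (White w))
                    (const_ends \<sigma>)"
  shows "good w"
proof (rule ccontr)
  assume bad: "\<not> good w"
  let ?Vs = "const_verts q B \<sigma>" and ?Es = "const_edges q B" and ?en = "const_ends \<sigma>"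
  let ?a = "(i, w)"
  define T where "T = comp_minus_verts ?Vs ?Es ?en ?a (White w)"
  define TE where "TE = comp_minus_edges ?Vs ?Es ?en ?a (White w)"
  define v where "v = ColV i (orbit_of (cperm \<sigma> i) w)"
  have ena: "?en ?a = {White w, v}" unfolding const_ends_def v_def by simp
  have vT: "v \<notin> T"
  proof
    assume "v \<in> T"
    then have c1: "g_conn ?Vs (?Es - {?a}) ?en (White w) v" unfolding T_def comp_minus_verts_def by simp
    obtain y z where yz: "?en ?a = {y, z}" "y \<noteq> z" "\<not> g_conn ?Vs (?Es - {?a}) ?en y z"
      using br unfolding g_bridge_def by blast
    have "(y = White w \<and> z = v) \<or> (y = v \<and> z = White w)" using yz ena by (metis doubleton_eq_iff)
    then show False using c1 yz g_conn_sym by metis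
  qed
  define nc where "nc = (\<lambda>cin::nat. if cin = 1 then 2 else (1::nat))"
  have nc: "1 \<le> nc c" "nc c \<le> q" "nc c \<noteq> c" for c using q2 unfolding nc_def by auto
  define ch where "ch b c = (SOME u. u \<in> orbit_of (cperm \<sigma> c) b \<and> u \<noteq> b \<and> \<not> good u \<and> u \<in> B)" for b c
  have chp: "ch b c \<in> orbit_of (cperm \<sigma> c) b \<and> ch b c \<noteq> b \<and> \<not> good (ch b c) \<and> ch b c \<in> B"
    if "b \<in> B" "\<not> good b" "1 \<le> c" "c \<le> q" for b c
  proof -
    have "\<exists>u. u \<in> orbit_of (cperm \<sigma> c) b \<and> u \<noteq> b \<and> \<not> good u \<and> u \<in> B"
      using bad_step that by blast
    then show ?thesis unfolding ch_def by (rule someI_ex)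
  qed
  define step where "step p = (ch (fst p) (nc (snd p)), nc (snd p))" for p
  define s where "s k = (step ^^ k) (w, i)" for k
  have sS: "s (Suc k) = step (s k)" for k unfolding s_def by simp
  have inv: "fst (s k) \<in> B \<and> \<not> good (fst (s k))" for k
  proof (induction k)
    case 0 then show ?case using w bad unfolding s_def by simp
  next
    case (Suc k)
    then show ?case using sS chp nc unfolding step_def by simp
  qed
  have stepp: "fst (s (Suc k)) \<in> orbit_of (cperm \<sigma> (snd (s (Suc k)))) (fst (s k)) \<and> fst (s (Suc k)) \<noteq> fst (s k)
     \<and> snd (s (Suc k)) = nc (snd (s k))" for k
    using sS chp[of "fst (s k)" "nc (snd (s k))"] inv[of k] nc unfolding step_def by simp
  define u where "u k = fst (s k)" for k
  define cc where "cc k = snd (s (Suc k))" for k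
  have uB: "u k \<in> B" for k using inv u_def by simp
  have u0: "u 0 = w" unfolding u_def s_def by simp
  have cc0: "cc 0 \<noteq> i" using stepp[of 0] nc unfolding cc_def s_def by simp
  have ccS: "cc (Suc k) \<noteq> cc k" for k using stepp[of "Suc k"] nc unfolding cc_def by simp
  have ccq: "1 \<le> cc k" "cc k \<le> q" for k using stepp[of k] nc unfolding cc_def by simp_all
  have uS: "u (Suc k) \<in> orbit_of (cperm \<sigma> (cc k)) (u k)" "u (Suc k) \<noteq> u k" for k
    using stepp[of k] unfolding cc_def u_def by blast+
  define Ob where "Ob k = orbit_of (cperm \<sigma> (cc k)) (u k)" for k
  have OS: "orbit_of (cperm \<sigma> (cc k)) (u (Suc k)) = Ob k" for k
    unfolding Ob_def using orbit_eq ccq uB uS by blast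
  define x where "x n = (if even n then White (u (n div 2)) else ColV (cc (n div 2)) (Ob (n div 2)))" for n
  define e where "e n = (if even n then (cc (n div 2), u (n div 2)) else (cc (n div 2), u (Suc (n div 2))))" for n
  have x2: "x (2*k) = White (u k)" "x (Suc (2*k)) = ColV (cc k) (Ob k)" for k unfolding x_def by simp_all
  have e2: "e (2*k) = (cc k, u k)" "e (Suc (2*k)) = (cc k, u (Suc k))" for k unfolding e_def by simp_all
  have x3: "x (Suc (Suc (2*k))) = White (u (Suc k))" for k using x2[of "Suc k"] by simp
  have e3: "e (Suc (Suc (2*k))) = (cc (Suc k), u (Suc k))" for k using e2[of "Suc k"] by simp
  have par: "n = 2 * (n div 2) \<or> n = Suc (2 * (n div 2))" for n::nat by presburger
  have ends: "?en (e n) = {x n, x (Suc n)}" for n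
  proof -
    obtain k where "n = 2*k \<or> n = Suc (2*k)" using par by blast
    then show ?thesis
      using x2 x3 e2 OS unfolding const_ends_def Ob_def by (auto simp: insert_commute)
  qed
  have nl: "x n \<noteq> x (Suc n)" for n
  proof -
    obtain k where "n = 2*k \<or> n = Suc (2*k)" using par by blast
    then show ?thesis using x2 x3 by auto
  qed
  have nb: "e n \<noteq> e (Suc n)" for n
  proof -
    obtain k where "n = 2*k \<or> n = Suc (2*k)" using par by blast
    then show ?thesis
    proof (elim disjE)
      assume n: "n = 2*k"
      have "e n = (cc k, u k)" "e (Suc n) = (cc k, u (Suc k))" using e2 n by simp_all
      then show ?thesis using uS(2)[of k] by (simp add: eq_commute)
    next
      assume n: "n = Suc (2*k)"
      have "e n = (cc k, u (Suc k))" "e (Suc n) = (cc (Suc k), u (Suc k))" using e2 e3 n by simp_all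
      then show ?thesis using ccS[of k] by (simp add: eq_commute)
    qed
  qed
  have xV: "x n \<in> ?Vs" for n
  proof -
    obtain k where "n = 2*k \<or> n = Suc (2*k)" using par by blast
    then show ?thesis using x2 White_in ColV_in uB ccq unfolding Ob_def by auto
  qed
  have eE: "e n \<in> ?Es" for n
  proof -
    obtain k where "n = 2*k \<or> n = Suc (2*k)" using par by blast
    then show ?thesis using e2 E_in uB ccq by auto
  qed
  have x0: "x 0 = White w" using x2[of 0] u0 by simp
  have e0: "e 0 \<noteq> ?a" using e2[of 0] cc0 by simp
  have "\<not> inj x"
  proof
    assume "inj x"
    moreover have "finite (range x)" using xV fin_verts by (meson finite_subset image_subsetI)
    ultimately have "finite (UNIV::nat set)" using finite_imageD by blast
    then show False by simp
  qed
  then obtain m0 j0 where mj0: "m0 < j0" "x m0 = x j0" unfolding inj_def by (metis linorder_neqE_nat)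
  define P where "P j \<longleftrightarrow> (\<exists>m<j. x m = x j)" for j
  define j where "j = (LEAST j. P j)"
  have Pj: "P j" unfolding j_def using mj0 P_def by (metis LeastI)
  then obtain m where mj: "m < j" "x m = x j" unfolding P_def by blast
  have injj: "inj_on x {0..<j}"
  proof (rule inj_onI)
    fix a b assume ab: "a \<in> {0..<j}" "b \<in> {0..<j}" "x a = x b"
    show "a = b"
    proof (rule ccontr)
      assume ne: "a \<noteq> b"
      have nl: "\<not> P t" if "t < j" for t using that not_less_Least unfolding j_def by blast
      show False
      proof (cases "a < b")
        case True
        then have "P b" unfolding P_def using ab(3) by blast
        then show False using nl ab(2) by simp
      next
        case False
        then have "b < a" using ne by simp
        then have "P a" unfolding P_def using ab(3) by metis
        then show False using nl ab(1) by simp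
      qed
    qed
  qed
  have inT: "\<forall>k\<le>j. x k \<in> T"
  proof (intro allI impI)
    fix k assume "k \<le> j"
    then show "x k \<in> T"
    proof (induction k)
      case 0
      have "g_conn ?Vs (?Es - {?a}) ?en (White w) (White w)" unfolding g_conn_def using White_in w by simp
      then show ?case using x0 unfolding T_def comp_minus_verts_def by simp
    next
      case (Suc k)
      then have xk: "x k \<in> T" by simp
      have "e k \<noteq> ?a"
      proof
        assume ea: "e k = ?a"
        have E0: "?en (e k) = {x k, x (Suc k)}" by (rule ends)
        then have E: "{x k, x (Suc k)} = {White w, v}" using ea ena by simp
        have "x k \<in> {White w, v}" by (metis E insertI1)
        moreover have "x k \<noteq> v" using xk vT by blast
        ultimately have "x k = x 0" using x0 by simp
        moreover have "k \<in> {0..<j}" "0 \<in> {0..<j}" using Suc.prems mj by auto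
        ultimately have "k = 0" using inj_onD[OF injj] by blast
        then show False using ea e0 by simp
      qed
      then have "g_conn ?Vs (?Es - {?a}) ?en (White w) (x (Suc k))"
        using g_conn_ext[of ?Vs "?Es - {?a}" ?en "White w" "x k" "e k" "x (Suc k)"] xk eE ends nl xV
        unfolding T_def comp_minus_verts_def by blast
      then show ?case unfolding T_def comp_minus_verts_def by simp
    qed
  qed
  have inTE: "\<forall>k<j. e k \<in> TE"
  proof (intro allI impI)
    fix k assume k: "k < j"
    have "e k \<noteq> ?a"
    proof
      assume ea: "e k = ?a"
      have E0: "?en (e k) = {x k, x (Suc k)}" by (rule ends)
        then have E: "{x k, x (Suc k)} = {White w, v}" using ea ena by simp
      have "x k \<in> {White w, v}" by (metis E insertI1)
      moreover have "x k \<noteq> v" using inT k vT by auto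
      ultimately have "x k = x 0" using x0 by simp
      moreover have "k \<in> {0..<j}" "0 \<in> {0..<j}" using k mj by auto
      ultimately have "k = 0" using inj_onD[OF injj] by blast
      then show False using ea e0 by simp
    qed
    moreover have "?en (e k) \<subseteq> T" using ends inT k by simp
    ultimately show "e k \<in> TE" using eE unfolding TE_def comp_minus_edges_def T_def by simp
  qed
  have "g_has_cycle T TE ?en"
    using walk_cycle[of ?en e x m j T TE] ends nl nb mj injj inT inTE by blast
  then show False using tr unfolding g_tree_def T_def TE_def by blast
qed

end



context cg begin

definition dch where
  "dch vs \<longleftrightarrow> vs \<noteq> [] \<and> distinct vs \<and> set vs \<subseteq> V \<and> (\<forall>k. Suc k < length vs \<longrightarrow> (vs!k, vs!Suc k) \<in> Rel)"

lemma Rel_V: "(x, y) \<in> Rel \<Longrightarrow> x \<in> V \<and> y \<in> V"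
  unfolding Rel_def using sV by auto

lemma rtr_dch: "(x, y) \<in> Rel\<^sup>* \<Longrightarrow> x \<in> V \<Longrightarrow> \<exists>vs. dch vs \<and> hd vs = x \<and> last vs = y"
proof (induction rule: rtrancl_induct)
  case base
  then show ?case by (intro exI[of _ "[x]"]) (simp add: dch_def)
next
  case (step y z)
  then obtain vs where vs: "dch vs" "hd vs = x" "last vs = y" by blast
  have zV: "z \<in> V" using Rel_V step by blast
  show ?case
  proof (cases "z \<in> set vs")
    case False
    have ne: "vs \<noteq> []" using vs dch_def by blast
    have "dch (vs @ [z])"
    proof -
      have "(vs @ [z]) ! k = vs ! k" if "k < length vs" for k using that by (simp add: nth_append)
      moreover have "(vs @ [z]) ! length vs = z" by simp
      moreover have "vs ! (length vs - 1) = y" using vs(3) ne by (simp add: last_conv_nth)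
      ultimately have "\<forall>k. Suc k < length (vs @ [z]) \<longrightarrow> ((vs @ [z])!k, (vs @ [z])!Suc k) \<in> Rel"
      proof (intro allI impI)
        fix k assume k: "Suc k < length (vs @ [z])"
        show "((vs @ [z])!k, (vs @ [z])!Suc k) \<in> Rel"
        proof (cases "Suc k < length vs")
          case True
          then show ?thesis using vs(1) unfolding dch_def by (simp add: nth_append)
        next
          case False
          then have kk: "Suc k = length vs" using k by simp
          then have "(vs @ [z])!k = y" using vs(3) ne by (simp add: nth_append last_conv_nth flip: kk)
          moreover have "(vs @ [z])!Suc k = z" using kk by (simp add: nth_append)
          ultimately show ?thesis using step(2) by simp
        qed
      qed
      then show ?thesis using vs(1) False zV unfolding dch_def by auto
    qed
    then show ?thesis using vs ne by (intro exI[of _ "vs @ [z]"]) simp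
  next
    case True
    then obtain t where t: "t < length vs" "vs ! t = z" by (metis in_set_conv_nth)
    have "dch (take (Suc t) vs)"
      using vs(1) t unfolding dch_def by (auto dest: in_set_takeD)
    moreover have "hd (take (Suc t) vs) = x" using vs(2) t by (metis hd_take zero_less_Suc)
    moreover have "last (take (Suc t) vs) = z" using t by (simp add: take_Suc_conv_app_nth)
    ultimately show ?thesis by blast
  qed
qed

lemma dch_cs: "dch vs \<Longrightarrow> \<exists>cs. path_no0 q V \<sigma> vs cs"
proof -
  assume d: "dch vs"
  define cs where "cs = map (\<lambda>k. SOME c. 1 \<le> c \<and> c \<le> q \<and> vs!Suc k = \<sigma> c (vs!k)) [0..<length vs - 1]"
  have "\<forall>k < length cs. 1 \<le> cs ! k \<and> cs ! k \<le> q \<and> vs ! (k + 1) = \<sigma> (cs ! k) (vs ! k)"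
  proof (intro allI impI)
    fix k assume k: "k < length cs"
    then have "Suc k < length vs" unfolding cs_def by simp
    then have "(vs!k, vs!Suc k) \<in> Rel" using d unfolding dch_def by blast
    then have "\<exists>c. 1 \<le> c \<and> c \<le> q \<and> vs!Suc k = \<sigma> c (vs!k)" unfolding Rel_def by blast
    then have "1 \<le> (SOME c. 1 \<le> c \<and> c \<le> q \<and> vs!Suc k = \<sigma> c (vs!k)) \<and>
      (SOME c. 1 \<le> c \<and> c \<le> q \<and> vs!Suc k = \<sigma> c (vs!k)) \<le> q \<and>
      vs!Suc k = \<sigma> (SOME c. 1 \<le> c \<and> c \<le> q \<and> vs!Suc k = \<sigma> c (vs!k)) (vs!k)" by (rule someI_ex)
    moreover have "cs!k = (SOME c. 1 \<le> c \<and> c \<le> q \<and> vs!Suc k = \<sigma> c (vs!k))" using k unfolding cs_def by simp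
    ultimately have "1 \<le> cs!k \<and> cs!k \<le> q \<and> vs!Suc k = \<sigma> (cs!k) (vs!k)" by simp
    then show "1 \<le> cs ! k \<and> cs ! k \<le> q \<and> vs ! (k + 1) = \<sigma> (cs ! k) (vs ! k)" by simp
  qed
  moreover have "length vs = length cs + 1" using d unfolding cs_def dch_def by (cases vs) auto
  moreover have "distinct vs" "set vs \<subseteq> V" using d unfolding dch_def by simp_all
  ultimately have "path_no0 q V \<sigma> vs cs" unfolding path_no0_def by simp
  then show ?thesis by blast
qed

lemma path_snoc:
  assumes p: "path_no0 q V \<sigma> vs cs" and y: "y \<notin> set vs" "y \<in> V" and c: "1 \<le> c" "c \<le> q"
    and ye: "y = \<sigma> c (last vs)"
  shows "path_no0 q V \<sigma> (vs @ [y]) (cs @ [c]) \<and> (c, {last vs, y}) \<in> path_edges (vs @ [y]) (cs @ [c])"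
proof -
  have len: "length vs = length cs + 1" using p unfolding path_no0_def by simp
  then have ne: "vs \<noteq> []" by auto
  have lv: "last vs = vs ! length cs" using len ne by (simp add: last_conv_nth)
  have A: "\<forall>k < length (cs @ [c]). 1 \<le> (cs @ [c]) ! k \<and> (cs @ [c]) ! k \<le> q \<and>
      (vs @ [y]) ! (k + 1) = \<sigma> ((cs @ [c]) ! k) ((vs @ [y]) ! k)"
  proof (intro allI impI)
    fix k assume k: "k < length (cs @ [c])"
    show "1 \<le> (cs @ [c]) ! k \<and> (cs @ [c]) ! k \<le> q \<and>
      (vs @ [y]) ! (k + 1) = \<sigma> ((cs @ [c]) ! k) ((vs @ [y]) ! k)"
    proof (cases "k < length cs")
      case True
      then show ?thesis using p len unfolding path_no0_def by (simp add: nth_append)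
    next
      case False
      then have "k = length cs" using k by simp
      then show ?thesis using c ye lv len by (simp add: nth_append)
    qed
  qed
  have f1: "path_no0 q V \<sigma> (vs @ [y]) (cs @ [c])"
    using A p y len unfolding path_no0_def by auto
  have f2: "(c, {last vs, y}) \<in> path_edges (vs @ [y]) (cs @ [c])"
    unfolding path_edges_def
    by (rule CollectI, rule exI[of _ "length cs"]) (simp add: nth_append lv len)
  show ?thesis using f1 f2 by (intro conjI)
qed

lemma path_snoc_edges:
  assumes "length vs = length cs + 1"
  shows "path_edges vs cs \<subseteq> path_edges (vs @ [y]) (cs @ [c])"
proof
  fix z assume "z \<in> path_edges vs cs"
  then obtain k where k: "z = (cs ! k, {vs ! k, vs ! (k + 1)})" "k < length cs" unfolding path_edges_def by blast
  then have "(cs @ [c]) ! k = cs ! k" "(vs @ [y]) ! k = vs ! k" "(vs @ [y]) ! (k+1) = vs ! (k+1)"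
    using assms by (simp_all add: nth_append)
  then show "z \<in> path_edges (vs @ [y]) (cs @ [c])" unfolding path_edges_def
    using k by (intro CollectI exI[of _ k]) simp
qed

lemma path_cons:
  assumes p: "path_no0 q V \<sigma> vs cs" and x: "x \<notin> set vs" "x \<in> V" and c: "1 \<le> c" "c \<le> q"
    and xe: "hd vs = \<sigma> c x"
  shows "path_no0 q V \<sigma> (x # vs) (c # cs) \<and> (c, {x, hd vs}) \<in> path_edges (x # vs) (c # cs)
     \<and> path_edges vs cs \<subseteq> path_edges (x # vs) (c # cs)"
proof -
  have len: "length vs = length cs + 1" using p unfolding path_no0_def by simp
  then have ne: "vs \<noteq> []" by auto
  have h: "vs ! 0 = hd vs" using ne by (simp add: hd_conv_nth)
  have A: "\<forall>k < length (c # cs). 1 \<le> (c # cs) ! k \<and> (c # cs) ! k \<le> q \<and>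
      (x # vs) ! (k + 1) = \<sigma> ((c # cs) ! k) ((x # vs) ! k)"
  proof (intro allI impI)
    fix k assume k: "k < length (c # cs)"
    show "1 \<le> (c # cs) ! k \<and> (c # cs) ! k \<le> q \<and> (x # vs) ! (k + 1) = \<sigma> ((c # cs) ! k) ((x # vs) ! k)"
    proof (cases k)
      case 0 then show ?thesis using c xe h by simp
    next
      case (Suc k') then show ?thesis using k p unfolding path_no0_def by simp
    qed
  qed
  have f1: "path_no0 q V \<sigma> (x # vs) (c # cs)" using A p x len unfolding path_no0_def by auto
  have f2: "(c, {x, hd vs}) \<in> path_edges (x # vs) (c # cs)"
    unfolding path_edges_def by (rule CollectI, rule exI[of _ 0]) (simp add: h)
  have f3: "path_edges vs cs \<subseteq> path_edges (x # vs) (c # cs)"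
  proof
    fix z assume "z \<in> path_edges vs cs"
    then obtain k where "z = (cs ! k, {vs ! k, vs ! (k + 1)})" "k < length cs" unfolding path_edges_def by blast
    then show "z \<in> path_edges (x # vs) (c # cs)" unfolding path_edges_def
      by (intro CollectI exI[of _ "Suc k"]) simp
  qed
  show ?thesis using f1 f2 f3 by (intro conjI)
qed

end



context cg begin

lemma sne: "c \<le> q \<Longrightarrow> x \<in> V \<Longrightarrow> \<sigma> c x \<noteq> x"
  using rb unfolding rooted_bipartite_cg_def colored_graph_def by blast

lemma interval_good:
  assumes b1: "b1 \<in> B" and i: "1 \<le> i" "i \<le> q"
    and st: "side_tree_bridges q B \<sigma> {(i, x) | x. x \<in> cyc_interval (cperm \<sigma> i) b1 b2}"
  shows "\<forall>x \<in> cyc_interval (cperm \<sigma> i) b1 b2. good x"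
proof
  fix x assume x: "x \<in> cyc_interval (cperm \<sigma> i) b1 b2"
  have xB: "x \<in> B" using x powB b1 i unfolding cyc_interval_def by auto
  have "(i, x) \<in> {(i, x) | x. x \<in> cyc_interval (cperm \<sigma> i) b1 b2}" using x by blast
  then have "g_bridge (const_verts q B \<sigma>) (const_edges q B) (const_ends \<sigma>) (i, x) \<and>
        g_tree (comp_minus_verts (const_verts q B \<sigma>) (const_edges q B) (const_ends \<sigma>) (i, x) (White x))
               (comp_minus_edges (const_verts q B \<sigma>) (const_edges q B) (const_ends \<sigma>) (i, x) (White x))
               (const_ends \<sigma>)"
    using st unfolding side_tree_bridges_def by fastforce
  then show "good x" using tree_good xB i by blast
qed

lemma chain_conn:
  assumes b1: "b1 \<in> B" and i: "1 \<le> i" "i \<le> q" and o: "b2 \<in> orbit_of (cperm \<sigma> i) b1" and ne: "b1 \<noteq> b2"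
    and gd: "\<forall>x \<in> cyc_interval (cperm \<sigma> i) b1 b2. good x"
  shows "(\<sigma> i b1, b2) \<in> Rel\<^sup>*"
proof -
  let ?f = "cperm \<sigma> i"
  obtain j where j: "b2 = (?f^^j) b1" using o unfolding orbit_of_def by blast
  then have "j \<noteq> 0" using ne by (cases j) auto
  then have ex: "\<exists>m. 0 < m \<and> (?f^^m) b1 = b2" using j by blast
  define L where "L = (LEAST m. 0 < m \<and> (?f^^m) b1 = b2)"
  have L: "0 < L" "(?f^^L) b1 = b2" using LeastI_ex[OF ex] unfolding L_def by blast+
  have gk: "good ((?f^^k) b1)" if "1 \<le> k" "k \<le> L" for k
    using gd that unfolding cyc_interval_def L_def by blast
  have uB: "(?f^^k) b1 \<in> B" for k using powB b1 i by blast
  have claim: "k < L \<longrightarrow> (\<sigma> i b1, (?f^^(Suc k)) b1) \<in> Rel\<^sup>*" for k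
  proof (induction k)
    case 0
    show ?case
    proof
      assume "0 < L"
      have "good (?f b1)" using gk[of 1] L by simp
      then show "(\<sigma> i b1, (?f^^(Suc 0)) b1) \<in> Rel\<^sup>*" using s0pi[OF i(2) b1] unfolding good_def by simp
    qed
  next
    case (Suc k)
    show ?case
    proof
      assume k: "Suc k < L"
      let ?u = "(?f^^(Suc k)) b1"
      have a1: "(\<sigma> i b1, ?u) \<in> Rel\<^sup>*" using Suc k by simp
      have a2: "(?u, \<sigma> i ?u) \<in> Rel" using Rel_edge uB BV i by blast
      have e: "\<sigma> i ?u = \<sigma> 0 ((?f^^(Suc (Suc k))) b1)" using s0pi[OF i(2) uB[of "Suc k"]] by simp
      have "good ((?f^^(Suc (Suc k))) b1)" by (rule gk) (use k in auto)
      then have a3: "(\<sigma> i ?u, (?f^^(Suc (Suc k))) b1) \<in> Rel\<^sup>*" using e unfolding good_def by simp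
      show "(\<sigma> i b1, (?f^^(Suc (Suc k))) b1) \<in> Rel\<^sup>*"
        using a1 a2 a3 by (meson rtrancl_into_rtrancl rtrancl_trans)
    qed
  qed
  obtain k where "L = Suc k" using L(1) gr0_implies_Suc by blast
  then show ?thesis using claim[of k] L by simp
qed

lemma final_path:
  assumes b: "b1 \<in> B" "b2 \<in> B" "b1 \<noteq> b2" and i: "1 \<le> i" "i \<le> q"
    and c: "(x0, y0) \<in> Rel\<^sup>*" and x0: "x0 \<in> {b1, \<sigma> i b1}" and y0: "y0 \<in> {b2, \<sigma> i b2}"
  shows "\<exists>vs cs. path_no0 q V \<sigma> vs cs \<and>
           (i, {b1, \<sigma> i b1}) \<in> path_edges vs cs \<and> (i, {b2, \<sigma> i b2}) \<in> path_edges vs cs"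
proof -
  let ?X = "{b1, \<sigma> i b1}" and ?Y = "{b2, \<sigma> i b2}"
  have bV: "b1 \<in> V" "b2 \<in> V" using b BV by auto
  have sb: "\<sigma> i b1 \<notin> B" "\<sigma> i b2 \<notin> B" using sB bV b i by auto
  have sinj: "\<sigma> i b1 \<noteq> \<sigma> i b2" using sinv bV b i by metis
  have XY: "?X \<inter> ?Y = {}" using b sb sinj by auto
  have x0V: "x0 \<in> V" using x0 bV sV i by auto
  define P where "P n \<longleftrightarrow> (\<exists>vs. dch vs \<and> length vs = n \<and> hd vs \<in> ?X \<and> last vs \<in> ?Y)" for n
  obtain vs0 where "dch vs0" "hd vs0 = x0" "last vs0 = y0" using rtr_dch[OF c x0V] by blast
  then have "P (length vs0)" unfolding P_def using x0 y0 by blast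
  then have Pn: "P (LEAST n. P n)" by (rule LeastI)
  then obtain vs where vs: "dch vs" "length vs = (LEAST n. P n)" "hd vs \<in> ?X" "last vs \<in> ?Y"
    unfolding P_def by blast
  have ne: "vs \<noteq> []" using vs dch_def by blast
  have noX: "vs ! k \<notin> ?X" if "0 < k" "k < length vs" for k
  proof
    assume a: "vs ! k \<in> ?X"
    have "dch (drop k vs)" using vs(1) that unfolding dch_def by (auto dest: in_set_dropD)
    moreover have "hd (drop k vs) = vs ! k" using that by (simp add: hd_drop_conv_nth)
    moreover have "last (drop k vs) = last vs" using that by simp
    ultimately have "P (length (drop k vs))" unfolding P_def using a vs(4) by metis
    moreover have "length (drop k vs) < (LEAST n. P n)" using that vs(2) by simp
    ultimately show False using not_less_Least by blast
  qed
  have noY: "vs ! k \<notin> ?Y" if "Suc k < length vs" for k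
  proof
    assume a: "vs ! k \<in> ?Y"
    have "dch (take (Suc k) vs)" using vs(1) that unfolding dch_def by (auto dest: in_set_takeD)
    moreover have "hd (take (Suc k) vs) = hd vs" using ne by (simp add: hd_take)
    moreover have "last (take (Suc k) vs) = vs ! k" using that by (simp add: take_Suc_conv_app_nth)
    ultimately have "P (length (take (Suc k) vs))" unfolding P_def using a vs(3) by metis
    moreover have "length (take (Suc k) vs) < (LEAST n. P n)" using that vs(2) by simp
    ultimately show False using not_less_Least by blast
  qed
  obtain cs where p: "path_no0 q V \<sigma> vs cs" using dch_cs vs(1) by blast
  have len: "length vs = length cs + 1" using p unfolding path_no0_def by simp
  define xa where "xa = hd vs" define ya where "ya = last vs"
  define x' where "x' = (if xa = b1 then \<sigma> i b1 else b1)"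
  define y' where "y' = (if ya = b2 then \<sigma> i b2 else b2)"
  have xa: "xa \<in> ?X" "ya \<in> ?Y" using vs xa_def ya_def by auto
  have x'X: "x' \<in> ?X" "x' \<noteq> xa" "xa = \<sigma> i x'" "{x', xa} = ?X"
    using xa(1) sinv sne bV i unfolding x'_def by auto
  have y'Y: "y' \<in> ?Y" "y' \<noteq> ya" "y' = \<sigma> i ya" "{ya, y'} = ?Y"
    using xa(2) sinv sne bV i unfolding y'_def by auto
  have x'V: "x' \<in> V" "y' \<in> V" using x'X(1) y'Y(1) bV sV i by auto
  have y'ns: "y' \<notin> set vs"
  proof
    assume "y' \<in> set vs"
    then obtain k where k: "k < length vs" "vs ! k = y'" by (metis in_set_conv_nth)
    show False
    proof (cases "Suc k < length vs")
      case True then show ?thesis using noY k y'Y by blast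
    next
      case False then have "k = length vs - 1" using k by simp
      then have "vs ! k = ya" using ne ya_def by (simp add: last_conv_nth)
      then show ?thesis using k y'Y by simp
    qed
  qed
  have s1: "path_no0 q V \<sigma> (vs @ [y']) (cs @ [i]) \<and> (i, {ya, y'}) \<in> path_edges (vs @ [y']) (cs @ [i])"
    using path_snoc[OF p y'ns x'V(2) i] y'Y(3) ya_def by simp
  have x'ns: "x' \<notin> set (vs @ [y'])"
  proof
    assume "x' \<in> set (vs @ [y'])"
    then consider "x' \<in> set vs" | "x' = y'" by auto
    then show False
    proof cases
      case 1
      then obtain k where k: "k < length vs" "vs ! k = x'" by (metis in_set_conv_nth)
      show False
      proof (cases k)
        case 0 then show ?thesis using k ne xa_def x'X by (simp add: hd_conv_nth)
      next
        case (Suc k') then show ?thesis using noX[of k] k x'X by simp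
      qed
    next
      case 2 then show False using XY x'X y'Y by blast
    qed
  qed
  have hh: "hd (vs @ [y']) = \<sigma> i x'" using ne xa_def x'X by simp
  have s2: "path_no0 q V \<sigma> (x' # vs @ [y']) (i # cs @ [i]) \<and> (i, {x', hd (vs @ [y'])}) \<in> path_edges (x' # vs @ [y']) (i # cs @ [i])
     \<and> path_edges (vs @ [y']) (cs @ [i]) \<subseteq> path_edges (x' # vs @ [y']) (i # cs @ [i])"
    using path_cons[OF conjunct1[OF s1] x'ns x'V(1) i hh] by simp
  have "hd (vs @ [y']) = xa" using ne xa_def by simp
  then show ?thesis using s1 s2 x'X(4) y'Y(4) by (intro exI[of _ "x' # vs @ [y']"] exI[of _ "i # cs @ [i]"]) auto
qed

end


theorem mainTheorem6:
  fixes q :: nat and V :: "'v set" and \<sigma> :: "nat \<Rightarrow> 'v \<Rightarrow> 'v" and r :: 'v and B :: "'v set"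
    and i :: nat and b1 b2 :: 'v
  assumes "q \<ge> 2"
    and "rooted_bipartite_cg q V \<sigma> r B"
    and "1 \<le> i" and "i \<le> q"
    and "b1 \<in> B" and "b2 \<in> B" and "b2 \<in> orbit_of (cperm \<sigma> i) b1" and "b1 \<noteq> b2"
    and "side_tree_bridges q B \<sigma> {(i, x) | x. x \<in> cyc_interval (cperm \<sigma> i) b1 b2}
       \<or> side_tree_bridges q B \<sigma> {(i, x) | x. x \<in> cyc_interval (cperm \<sigma> i) b2 b1}"
  shows "\<exists>vs cs. path_no0 q V \<sigma> vs cs \<and>
           (i, {b1, \<sigma> i b1}) \<in> path_edges vs cs \<and> (i, {b2, \<sigma> i b2}) \<in> path_edges vs cs"
proof -
  interpret cg q V \<sigma> r B using assms(1,2) by unfold_locales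
  from assms(9) show ?thesis
  proof
    assume st: "side_tree_bridges q B \<sigma> {(i, x) | x. x \<in> cyc_interval (cperm \<sigma> i) b1 b2}"
    have "\<forall>x \<in> cyc_interval (cperm \<sigma> i) b1 b2. good x" using interval_good[OF assms(5,3,4) st] .
    then have "(\<sigma> i b1, b2) \<in> Rel\<^sup>*" using chain_conn assms by blast
    then show ?thesis using final_path[of b1 b2 i "\<sigma> i b1" b2] assms by blast
  next
    assume st: "side_tree_bridges q B \<sigma> {(i, x) | x. x \<in> cyc_interval (cperm \<sigma> i) b2 b1}"
    have "\<forall>x \<in> cyc_interval (cperm \<sigma> i) b2 b1. good x" using interval_good[OF assms(6,3,4) st] .
    moreover have "b1 \<in> orbit_of (cperm \<sigma> i) b2"
    proof -
      have "orbit_of (cperm \<sigma> i) b2 = orbit_of (cperm \<sigma> i) b1" using orbit_eq assms by blast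
      moreover have "b1 \<in> orbit_of (cperm \<sigma> i) b1" unfolding orbit_of_def
        by (rule CollectI, rule exI[of _ 0]) simp
      ultimately show ?thesis by simp
    qed
    ultimately have "(\<sigma> i b2, b1) \<in> Rel\<^sup>*" using chain_conn assms by metis
    then have "(b1, \<sigma> i b2) \<in> Rel\<^sup>*" using Rel_star_sym by blast
    then show ?thesis using final_path[of b1 b2 i b1 "\<sigma> i b2"] assms by blast
  qed
qed

end
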